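(* Let $(D,V)$ be an admissible pair, $E,\alpha$ as below, and $\beta\in\mathbb{R}$ with $|\beta+\alpha|\le\tau(E)$. Then $V_\beta C^\infty(D)$ is a closed subspace of $C^\infty(D)$, and every $\varphi\in(V_\beta C^\infty(D))^\perp$ satisfies $(\mathcal{W}\varphi)(z)=ce^{i\beta z}$ for all $z\in\mathbb{C}$, for some constant $c\in\mathbb{C}$.
   Context: Let $H$ be a separable complex Hilbert space. A pair $(D,V)$ of operators is called admissible if: (i) $D:\mathscr{D}(D)\subset H\to H$ is a densely defined closed linear operator; (ii) $\dim\ker D=1$; (iii) $D$ has a self-adjoint restriction with compact resolvent; (iv) $V:H\to H$ is a compact operator with $\sigma(V)=\{0\}$; (v) $\operatorname{Ran}V\subset\mathscr{D}(D)$ and $DV=I$. Fix $0\neq\phi_0\in\ker D$ and put $\phi_\lambda=(I-\lambda V)^{-1}\phi_0$ for $\lambda\in\mathbb{C}$. The generalized Fourier transform is $(\mathcal{W}x)(\lambda)=\langle x,\phi_{\bar\lambda}\rangle_H$; $\mathcal{W}H$ is a Hilbert space of entire functions with norm $\|\mathcal{W}x\|:=\|x\|_H$. A Hermite–Biehler (HB) function is an entire $E$ with $|E(z)|>|E(\bar z)|$ for $z\in\mathbb{C}_+$; $\mathcal{H}(E)$ is the space of entire $f$ with $f/E,f^\#/E\in H^2(\mathbb{C}_+)$ ($f^\#(z)=\overline{f(\bar z)}$), normed by $\|f/E\|_{L^2(\mathbb{R})}$; $E$ is regular if $1/((z+i)E)\in H^2(\mathbb{C}_+)$; $\tau(f)=\limsup_{|z|\to\infty}\log|f(z)|/|z|$.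 It is known that there exist a regular HB function $E$ with no real zeros and $\alpha\in\mathbb{R}$ such that $f\mapsto e^{i\alpha z}f$ is a unitary map of $\mathcal{W}H$ onto $\mathcal{H}(E)$; fix such $E$ and $\alpha$. For $\beta\in\mathbb{R}$ with $|\beta+\alpha|\le\tau(E)$, the function $(1-e^{i\beta z})/z$ lies in $\mathcal{W}H$; set $x_\beta=\mathcal{W}^{-1}\big((1-e^{i\beta z})/z\big)$ and $V_\beta u=Vu+\langle u,x_\beta\rangle\phi_0$ for $u\in H$. Let $\mathscr{D}(D^1)=\mathscr{D}(D)$, $\mathscr{D}(D^n)=\{x\in\mathscr{D}(D^{n-1}):D^{n-1}x\in\mathscr{D}(D)\}$, and $C^\infty(D)=\bigcap_{n\ge1}\mathscr{D}(D^n)$, a Fréchet space with the metric $d(x,y)=\sum_{j\ge0}2^{-j}\frac{\|D^jx-D^jy\|_H}{1+\|D^jx-D^jy\|_H}$; $D$ and $V_\beta$ act continuously on it. For $\varphi\in(C^\infty(D))'$ set $(\mathcal{W}\varphi)(z)=\overline{\varphi(\phi_{\bar z})}$; $\mathcal{M}^\perp$ denotes the set of continuous functionals vanishing on $\mathcal{M}$. *)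

theory Defs
  imports "HOL-Analysis.Analysis" "HOL-Library.Extended_Real" "HOL-Library.Liminf_Limsup"
begin

text \<open>The Hilbert space H is modelled by a type 'h carrying an additive group
structure, a complex scalar multiplication sc and an inner product ip
(linear in the first, conjugate linear in the second argument).\<close>

definition hnorm :: "('h \<Rightarrow> 'h \<Rightarrow> complex) \<Rightarrow> 'h \<Rightarrow> real" where
  "hnorm ip x = sqrt (Re (ip x x))"

definition hconv :: "('h \<Rightarrow> 'h \<Rightarrow> complex) \<Rightarrow> (nat \<Rightarrow> 'h::ab_group_add) \<Rightarrow> 'h \<Rightarrow> bool" where
  "hconv ip X l \<longleftrightarrow> (\<lambda>n. hnorm ip (X n - l)) \<longlonglongrightarrow> 0"

definition separable_complex_hilbert ::
  "(complex \<Rightarrow> 'h::ab_group_add \<Rightarrow> 'h) \<Rightarrow> ('h \<Rightarrow> 'h \<Rightarrow> complex) \<Rightarrow> bool" where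
  "separable_complex_hilbert sc ip \<longleftrightarrow>
     (\<forall>a x y. sc a (x + y) = sc a x + sc a y) \<and>
     (\<forall>a b x. sc (a + b) x = sc a x + sc b x) \<and>
     (\<forall>a b x. sc a (sc b x) = sc (a * b) x) \<and>
     (\<forall>x. sc 1 x = x) \<and>
     (\<forall>x y z. ip (x + y) z = ip x z + ip y z) \<and>
     (\<forall>a x y. ip (sc a x) y = a * ip x y) \<and>
     (\<forall>x y. ip y x = cnj (ip x y)) \<and>
     (\<forall>x. 0 \<le> Re (ip x x)) \<and>
     (\<forall>x. ip x x = 0 \<longrightarrow> x = 0) \<and>
     (\<forall>X. (\<forall>e>0. \<exists>N. \<forall>m\<ge>N. \<forall>n\<ge>N. hnorm ip (X m - X n) < e) \<longrightarrow> (\<exists>l. hconv ip X l)) \<and>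
     (\<exists>S. countable S \<and> (\<forall>x. \<exists>X. (\<forall>n. X n \<in> S) \<and> hconv ip X x))"

definition hsubspace :: "(complex \<Rightarrow> 'h::ab_group_add \<Rightarrow> 'h) \<Rightarrow> 'h set \<Rightarrow> bool" where
  "hsubspace sc M \<longleftrightarrow> 0 \<in> M \<and> (\<forall>x\<in>M. \<forall>y\<in>M. x + y \<in> M) \<and> (\<forall>a. \<forall>x\<in>M. sc a x \<in> M)"

text \<open>Linear operator T with domain dm (T is only meaningful on dm).\<close>
definition linear_on :: "(complex \<Rightarrow> 'h::ab_group_add \<Rightarrow> 'h) \<Rightarrow> 'h set \<Rightarrow> ('h \<Rightarrow> 'h) \<Rightarrow> bool" where
  "linear_on sc dm T \<longleftrightarrow> hsubspace sc dm \<and>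
     (\<forall>x\<in>dm. \<forall>y\<in>dm. T (x + y) = T x + T y) \<and> (\<forall>a. \<forall>x\<in>dm. T (sc a x) = sc a (T x))"

definition dense_set :: "('h \<Rightarrow> 'h \<Rightarrow> complex) \<Rightarrow> 'h::ab_group_add set \<Rightarrow> bool" where
  "dense_set ip S \<longleftrightarrow> (\<forall>x. \<exists>X. (\<forall>n. X n \<in> S) \<and> hconv ip X x)"

definition closed_operator ::
  "(complex \<Rightarrow> 'h::ab_group_add \<Rightarrow> 'h) \<Rightarrow> ('h \<Rightarrow> 'h \<Rightarrow> complex) \<Rightarrow> 'h set \<Rightarrow> ('h \<Rightarrow> 'h) \<Rightarrow> bool" where
  "closed_operator sc ip dm T \<longleftrightarrow> linear_on sc dm T \<and>
     (\<forall>X x y. (\<forall>n. X n \<in> dm) \<and> hconv ip X x \<and> hconv ip (\<lambda>n. T (X n)) y \<longrightarrow> x \<in> dm \<and> T x = y)"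

definition bounded_op ::
  "(complex \<Rightarrow> 'h::ab_group_add \<Rightarrow> 'h) \<Rightarrow> ('h \<Rightarrow> 'h \<Rightarrow> complex) \<Rightarrow> ('h \<Rightarrow> 'h) \<Rightarrow> bool" where
  "bounded_op sc ip T \<longleftrightarrow> linear_on sc UNIV T \<and> (\<exists>K. \<forall>x. hnorm ip (T x) \<le> K * hnorm ip x)"

definition compact_op ::
  "(complex \<Rightarrow> 'h::ab_group_add \<Rightarrow> 'h) \<Rightarrow> ('h \<Rightarrow> 'h \<Rightarrow> complex) \<Rightarrow> ('h \<Rightarrow> 'h) \<Rightarrow> bool" where
  "compact_op sc ip T \<longleftrightarrow> linear_on sc UNIV T \<and>
     (\<forall>X. (\<exists>K. \<forall>n::nat. hnorm ip (X n) \<le> K) \<longrightarrow>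
          (\<exists>r l. strict_mono r \<and> hconv ip (\<lambda>n. T (X (r n))) l))"

definition op_spectrum ::
  "(complex \<Rightarrow> 'h::ab_group_add \<Rightarrow> 'h) \<Rightarrow> ('h \<Rightarrow> 'h \<Rightarrow> complex) \<Rightarrow> ('h \<Rightarrow> 'h) \<Rightarrow> complex set" where
  "op_spectrum sc ip T = {lam. \<not> (\<exists>S. bounded_op sc ip S \<and>
       (\<forall>x. S (T x - sc lam x) = x) \<and> (\<forall>y. T (S y) - sc lam (S y) = y))}"

text \<open>Self-adjoint operator A with domain dm (densely defined, A = A*).\<close>
definition self_adjoint_op ::
  "(complex \<Rightarrow> 'h::ab_group_add \<Rightarrow> 'h) \<Rightarrow> ('h \<Rightarrow> 'h \<Rightarrow> complex) \<Rightarrow> 'h set \<Rightarrow> ('h \<Rightarrow> 'h) \<Rightarrow> bool" where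
  "self_adjoint_op sc ip dm A \<longleftrightarrow> linear_on sc dm A \<and> dense_set ip dm \<and>
     {y. \<exists>z. \<forall>x\<in>dm. ip (A x) y = ip x z} = dm \<and>
     (\<forall>x\<in>dm. \<forall>y\<in>dm. ip (A x) y = ip x (A y))"

definition has_compact_resolvent ::
  "(complex \<Rightarrow> 'h::ab_group_add \<Rightarrow> 'h) \<Rightarrow> ('h \<Rightarrow> 'h \<Rightarrow> complex) \<Rightarrow> 'h set \<Rightarrow> ('h \<Rightarrow> 'h) \<Rightarrow> bool" where
  "has_compact_resolvent sc ip dm A \<longleftrightarrow>
     (\<exists>lam R. (\<forall>y. R y \<in> dm \<and> A (R y) - sc lam (R y) = y) \<and>
            (\<forall>x\<in>dm. R (A x - sc lam x) = x) \<and> compact_op sc ip R)"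

definition admissible ::
  "(complex \<Rightarrow> 'h::ab_group_add \<Rightarrow> 'h) \<Rightarrow> ('h \<Rightarrow> 'h \<Rightarrow> complex) \<Rightarrow> 'h set \<Rightarrow> ('h \<Rightarrow> 'h) \<Rightarrow> ('h \<Rightarrow> 'h) \<Rightarrow> bool" where
  "admissible sc ip domD D V \<longleftrightarrow>
     dense_set ip domD \<and> closed_operator sc ip domD D \<and>
     (\<exists>e. e \<noteq> 0 \<and> {x\<in>domD. D x = 0} = range (\<lambda>c. sc c e)) \<and>
     (\<exists>domA. domA \<subseteq> domD \<and> self_adjoint_op sc ip domA D \<and> has_compact_resolvent sc ip domA D) \<and>
     compact_op sc ip V \<and> op_spectrum sc ip V = {0} \<and>
     range V \<subseteq> domD \<and> (\<forall>x. D (V x) = x)"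

definition phi_fun ::
  "(complex \<Rightarrow> 'h::ab_group_add \<Rightarrow> 'h) \<Rightarrow> ('h \<Rightarrow> 'h) \<Rightarrow> 'h \<Rightarrow> complex \<Rightarrow> 'h" where
  "phi_fun sc V phi0 lam = (THE y. y - sc lam (V y) = phi0)"

definition gen_fourier ::
  "(complex \<Rightarrow> 'h::ab_group_add \<Rightarrow> 'h) \<Rightarrow> ('h \<Rightarrow> 'h \<Rightarrow> complex) \<Rightarrow> ('h \<Rightarrow> 'h) \<Rightarrow> 'h \<Rightarrow> 'h \<Rightarrow> complex \<Rightarrow> complex" where
  "gen_fourier sc ip V phi0 x lam = ip x (phi_fun sc V phi0 (cnj lam))"

definition upper_half_plane :: "complex set" where
  "upper_half_plane = {z. 0 < Im z}"

definition hardy2 :: "(complex \<Rightarrow> complex) set" where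
  "hardy2 = {F. F holomorphic_on upper_half_plane \<and>
     (\<exists>M. \<forall>y>0. (\<lambda>x::real. (cmod (F (Complex x y)))\<^sup>2) integrable_on UNIV \<and>
                 integral UNIV (\<lambda>x::real. (cmod (F (Complex x y)))\<^sup>2) \<le> M)}"

definition hermite_biehler :: "(complex \<Rightarrow> complex) \<Rightarrow> bool" where
  "hermite_biehler E \<longleftrightarrow> E holomorphic_on UNIV \<and>
     (\<forall>z. 0 < Im z \<longrightarrow> cmod (E (cnj z)) < cmod (E z))"

definition sharp :: "(complex \<Rightarrow> complex) \<Rightarrow> complex \<Rightarrow> complex" where
  "sharp f z = cnj (f (cnj z))"

definition de_branges_space :: "(complex \<Rightarrow> complex) \<Rightarrow> (complex \<Rightarrow> complex) set" where
  "de_branges_space E = {f. f holomorphic_on UNIV \<and>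
     (\<lambda>z. f z / E z) \<in> hardy2 \<and> (\<lambda>z. sharp f z / E z) \<in> hardy2}"

definition de_branges_norm :: "(complex \<Rightarrow> complex) \<Rightarrow> (complex \<Rightarrow> complex) \<Rightarrow> real" where
  "de_branges_norm E f = sqrt (integral UNIV (\<lambda>x::real. (cmod (f (of_real x) / E (of_real x)))\<^sup>2))"

definition regular_HB :: "(complex \<Rightarrow> complex) \<Rightarrow> bool" where
  "regular_HB E \<longleftrightarrow> (\<lambda>z. 1 / ((z + \<i>) * E z)) \<in> hardy2"

definition exp_type :: "(complex \<Rightarrow> complex) \<Rightarrow> ereal" where
  "exp_type f = Limsup at_infinity
     (\<lambda>z. if f z = 0 then -\<infinity> else ereal (ln (cmod (f z)) / cmod z))"

fun dom_pow :: "'h set \<Rightarrow> ('h \<Rightarrow> 'h) \<Rightarrow> nat \<Rightarrow> 'h set" where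
  "dom_pow domD D 0 = UNIV"
| "dom_pow domD D (Suc n) = {x \<in> dom_pow domD D n. (D ^^ n) x \<in> domD}"

definition C_inf :: "'h set \<Rightarrow> ('h \<Rightarrow> 'h) \<Rightarrow> 'h set" where
  "C_inf domD D = (\<Inter>n\<in>{1..}. dom_pow domD D n)"

definition C_inf_dist :: "('h \<Rightarrow> 'h \<Rightarrow> complex) \<Rightarrow> ('h \<Rightarrow> 'h) \<Rightarrow> 'h \<Rightarrow> 'h::ab_group_add \<Rightarrow> real" where
  "C_inf_dist ip D x y = (\<Sum>j. (1 / 2 ^ j) *
      (hnorm ip ((D ^^ j) x - (D ^^ j) y) / (1 + hnorm ip ((D ^^ j) x - (D ^^ j) y))))"

definition C_inf_closed :: "('h \<Rightarrow> 'h \<Rightarrow> complex) \<Rightarrow> 'h set \<Rightarrow> ('h \<Rightarrow> 'h) \<Rightarrow> 'h::ab_group_add set \<Rightarrow> bool" where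
  "C_inf_closed ip domD D M \<longleftrightarrow> M \<subseteq> C_inf domD D \<and>
     (\<forall>X y. (\<forall>n. X n \<in> M) \<and> y \<in> C_inf domD D \<and> (\<lambda>n. C_inf_dist ip D (X n) y) \<longlonglongrightarrow> 0 \<longrightarrow> y \<in> M)"

text \<open>Continuous linear functionals on C^\<infinity>(D) (values outside C^\<infinity>(D) are irrelevant).\<close>
definition C_inf_dual ::
  "(complex \<Rightarrow> 'h::ab_group_add \<Rightarrow> 'h) \<Rightarrow> ('h \<Rightarrow> 'h \<Rightarrow> complex) \<Rightarrow> 'h set \<Rightarrow> ('h \<Rightarrow> 'h) \<Rightarrow> ('h \<Rightarrow> complex) set" where
  "C_inf_dual sc ip domD D = {\<phi>.
     (\<forall>x\<in>C_inf domD D. \<forall>y\<in>C_inf domD D. \<phi> (x + y) = \<phi> x + \<phi> y) \<and>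
     (\<forall>a. \<forall>x\<in>C_inf domD D. \<phi> (sc a x) = a * \<phi> x) \<and>
     (\<forall>X y. (\<forall>n. X n \<in> C_inf domD D) \<and> y \<in> C_inf domD D \<and>
            (\<lambda>n. C_inf_dist ip D (X n) y) \<longlonglongrightarrow> 0 \<longrightarrow> (\<lambda>n. \<phi> (X n)) \<longlonglongrightarrow> \<phi> y)}"

definition annihilator ::
  "(complex \<Rightarrow> 'h::ab_group_add \<Rightarrow> 'h) \<Rightarrow> ('h \<Rightarrow> 'h \<Rightarrow> complex) \<Rightarrow> 'h set \<Rightarrow> ('h \<Rightarrow> 'h) \<Rightarrow> 'h set \<Rightarrow> ('h \<Rightarrow> complex) set" where
  "annihilator sc ip domD D M = {\<phi> \<in> C_inf_dual sc ip domD D. \<forall>x\<in>M. \<phi> x = 0}"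

definition gen_fourier_dual ::
  "(complex \<Rightarrow> 'h::ab_group_add \<Rightarrow> 'h) \<Rightarrow> ('h \<Rightarrow> 'h) \<Rightarrow> 'h \<Rightarrow> ('h \<Rightarrow> complex) \<Rightarrow> complex \<Rightarrow> complex" where
  "gen_fourier_dual sc V phi0 \<phi> z = cnj (\<phi> (phi_fun sc V phi0 (cnj z)))"

end

theory Submission
  imports Defs
begin


locale hilb =
  fixes sc :: "complex \<Rightarrow> 'h::ab_group_add \<Rightarrow> 'h" and ip :: "'h \<Rightarrow> 'h \<Rightarrow> complex"
  assumes H: "separable_complex_hilbert sc ip"
begin

lemma sc_add_right: "sc a (x + y) = sc a x + sc a y" using H unfolding separable_complex_hilbert_def by meson
lemma sc_add_left: "sc (a + b) x = sc a x + sc b x" using H unfolding separable_complex_hilbert_def by meson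
lemma sc_sc: "sc a (sc b x) = sc (a * b) x" using H unfolding separable_complex_hilbert_def by meson
lemma sc_one: "sc 1 x = x" using H unfolding separable_complex_hilbert_def by meson
lemma ip_add_left: "ip (x + y) z = ip x z + ip y z" using H unfolding separable_complex_hilbert_def by meson
lemma ip_sc_left: "ip (sc a x) y = a * ip x y" using H unfolding separable_complex_hilbert_def by meson
lemma ip_cnj: "ip y x = cnj (ip x y)" using H unfolding separable_complex_hilbert_def by meson
lemma ip_nonneg: "0 \<le> Re (ip x x)" using H unfolding separable_complex_hilbert_def by meson
lemma ip_zero: "ip x x = 0 \<Longrightarrow> x = 0" using H unfolding separable_complex_hilbert_def by meson

lemma mult_cnj_cmod: "z * cnj z = complex_of_real ((cmod z)^2)"
  by (simp add: complex_mult_cnj cmod_power2)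

lemma sc_zero_left[simp]: "sc 0 x = 0"
  using sc_add_left[of 0 0 x] by simp
lemma sc_zero_right[simp]: "sc a 0 = 0"
  using sc_add_right[of a 0 0] by simp
lemma sc_minus_left: "sc (- a) x = - sc a x"
proof -
  have "sc a x + sc (- a) x = 0" using sc_add_left[of a "-a" x] by simp
  from add.inverse_unique[OF this] show ?thesis by simp
qed
lemma sc_minus_right: "sc a (- x) = - sc a x"
proof -
  have "sc a x + sc a (- x) = 0" using sc_add_right[of a x "-x"] by simp
  from add.inverse_unique[OF this] show ?thesis by simp
qed
lemma sc_diff_right: "sc a (x - y) = sc a x - sc a y"
  using sc_add_right[of a x "-y"] by (simp add: sc_minus_right)
lemma sc_diff_left: "sc (a - b) x = sc a x - sc b x"
  using sc_add_left[of a "-b" x] by (simp add: sc_minus_left)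
lemma ip_zero_left[simp]: "ip 0 y = 0"
  using ip_add_left[of 0 0 y] by simp
lemma ip_minus_left: "ip (- x) y = - ip x y"
proof -
  have "ip x y + ip (- x) y = 0" using ip_add_left[of x "-x" y] by simp
  from add.inverse_unique[OF this] show ?thesis by simp
qed
lemma ip_diff_left: "ip (x - y) z = ip x z - ip y z"
  using ip_add_left[of x "-y" z] by (simp add: ip_minus_left)
lemma ip_add_right: "ip z (x + y) = ip z x + ip z y"
  by (metis ip_cnj ip_add_left complex_cnj_add)
lemma ip_sc_right: "ip x (sc a y) = cnj a * ip x y"
  by (metis ip_cnj ip_sc_left complex_cnj_mult)
lemma ip_diff_right: "ip z (x - y) = ip z x - ip z y"
  by (metis ip_cnj ip_diff_left complex_cnj_diff)
lemma ip_zero_right[simp]: "ip x 0 = 0"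
  by (metis ip_cnj ip_zero_left complex_cnj_zero)
lemma ip_self_real: "ip x x = of_real (Re (ip x x))"
proof -
  have "ip x x = cnj (ip x x)" using ip_cnj by blast
  hence "Im (ip x x) = 0" by (metis cnj.sel(2) add.inverse_neutral equal_neg_zero)
  thus ?thesis by (simp add: complex_eq_iff)
qed

lemma hnorm_nonneg: "0 \<le> hnorm ip x" unfolding hnorm_def by (simp add: ip_nonneg)
lemma hnorm_sq: "(hnorm ip x)^2 = Re (ip x x)" unfolding hnorm_def using ip_nonneg by simp
lemma hnorm_zero_iff: "hnorm ip x = 0 \<longleftrightarrow> x = 0"
proof
  assume "hnorm ip x = 0"
  hence "Re (ip x x) = 0" using hnorm_sq by (metis power_zero_numeral)
  hence "ip x x = 0" using ip_self_real by (metis of_real_0)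
  thus "x = 0" by (rule ip_zero)
qed (simp add: hnorm_def)
lemma hnorm_zero[simp]: "hnorm ip 0 = 0" by (simp add: hnorm_zero_iff)

lemma hnorm_sc: "hnorm ip (sc a x) = cmod a * hnorm ip x"
proof -
  have "ip (sc a x) (sc a x) = (a * cnj a) * ip x x" by (simp add: ip_sc_left ip_sc_right)
  also have "\<dots> = of_real ((cmod a)^2 * Re (ip x x))"
    by (subst ip_self_real) (simp add: mult_cnj_cmod)
  finally have "Re (ip (sc a x) (sc a x)) = (cmod a)^2 * Re (ip x x)" by simp
  thus ?thesis unfolding hnorm_def by (simp add: real_sqrt_mult)
qed

lemma hnorm_minus: "hnorm ip (- x) = hnorm ip x"
  using hnorm_sc[of "-1" x] by (simp add: sc_minus_left sc_one)
lemma hnorm_commute: "hnorm ip (x - y) = hnorm ip (y - x)"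
  using hnorm_minus[of "x - y"] by simp

lemma cauchy_schwarz: "cmod (ip x y) \<le> hnorm ip x * hnorm ip y"
proof (cases "y = 0")
  case True thus ?thesis by (simp add: hnorm_nonneg)
next
  case False
  define B where "B = Re (ip y y)"
  have Byy: "ip y y = of_real B" using ip_self_real B_def by simp
  have Bpos: "B > 0" using False ip_nonneg[of y] ip_zero[of y] Byy unfolding B_def
    by (metis less_eq_real_def of_real_0)
  define p where "p = ip x y"
  define t where "t = p / of_real B"
  have exp: "ip (x - sc t y) (x - sc t y) = ip x x - cnj t * ip x y - t * ip y x + t * cnj t * ip y y"
    by (simp only: ip_diff_left ip_diff_right ip_sc_left ip_sc_right) (simp add: algebra_simps)
  have yx: "ip y x = cnj p" unfolding p_def by (rule ip_cnj)
  define q where "q = p * cnj p"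
  have q: "q = of_real ((cmod p)^2)" unfolding q_def by (simp add: mult_cnj_cmod)
  have Bnz: "(of_real B :: complex) \<noteq> 0" using Bpos by simp
  have e1: "cnj t * p = q / of_real B" unfolding t_def q_def by (simp add: mult.commute)
  have e2: "t * cnj p = q / of_real B" unfolding t_def q_def by simp
  have e3: "t * cnj t * of_real B = q / of_real B" unfolding t_def q_def using Bnz
    by (simp add: field_simps power2_eq_square)
  have "ip (x - sc t y) (x - sc t y) = ip x x - q / of_real B - q / of_real B + q / of_real B"
    unfolding exp yx Byy p_def[symmetric] e1 e2 e3 by (rule refl)
  hence "ip (x - sc t y) (x - sc t y) = ip x x - q / of_real B" by simp
  hence "ip (x - sc t y) (x - sc t y) = ip x x - of_real ((cmod p)^2 / B)"
    unfolding q by (simp add: of_real_divide)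
  hence "0 \<le> Re (ip x x) - (cmod p)^2 / B" using ip_nonneg[of "x - sc t y"] by simp
  hence "(cmod p)^2 \<le> Re (ip x x) * B" using Bpos by (simp add: field_simps)
  also have "\<dots> = (hnorm ip x * hnorm ip y)^2" by (simp add: hnorm_sq B_def power_mult_distrib)
  finally show ?thesis unfolding p_def
    by (rule power2_le_imp_le) (simp add: hnorm_nonneg)
qed

lemma hnorm_triangle: "hnorm ip (x + y) \<le> hnorm ip x + hnorm ip y"
proof -
  have "(hnorm ip (x + y))^2 = Re (ip x x) + Re (ip x y) + Re (ip y x) + Re (ip y y)"
    by (simp add: hnorm_sq ip_add_left ip_add_right)
  also have "Re (ip y x) = Re (ip x y)" by (subst ip_cnj) simp
  also have "Re (ip x y) \<le> hnorm ip x * hnorm ip y"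
    using cauchy_schwarz[of x y] complex_Re_le_cmod by (metis order_trans)
  hence "Re (ip x x) + Re (ip x y) + Re (ip x y) + Re (ip y y) \<le> (hnorm ip x + hnorm ip y)^2"
    by (simp add: hnorm_sq[symmetric] power2_sum)
  finally show ?thesis by (rule power2_le_imp_le) (simp add: hnorm_nonneg add_nonneg_nonneg)
qed

lemma hnorm_triangle_diff: "hnorm ip (x - y) \<le> hnorm ip x + hnorm ip y"
  using hnorm_triangle[of x "-y"] by (simp add: hnorm_minus)

end


lemma dom_pow_char: "dom_pow domD D n = {x. \<forall>k<n. (D ^^ k) x \<in> domD}"
  by (induction n) (auto simp: less_Suc_eq)

lemma C_inf_char: "x \<in> C_inf domD D \<longleftrightarrow> (\<forall>k. (D ^^ k) x \<in> domD)"
proof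
  assume "x \<in> C_inf domD D"
  hence "\<forall>n\<in>{1..}. \<forall>k<n. (D ^^ k) x \<in> domD" unfolding C_inf_def dom_pow_char by blast
  show "\<forall>k. (D ^^ k) x \<in> domD"
  proof
    fix k :: nat
    have "Suc k \<in> {1..}" by simp
    thus "(D ^^ k) x \<in> domD" using \<open>\<forall>n\<in>{1..}. \<forall>k<n. (D ^^ k) x \<in> domD\<close> by blast
  qed
next
  assume "\<forall>k. (D ^^ k) x \<in> domD"
  thus "x \<in> C_inf domD D" unfolding C_inf_def dom_pow_char by blast
qed

lemma dist_term_tendsto:
  fixes g :: "nat \<Rightarrow> nat \<Rightarrow> real"
  assumes lim: "(\<lambda>n. \<Sum>j. (1 / 2 ^ j) * (g n j / (1 + g n j))) \<longlonglongrightarrow> 0"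
    and nn: "\<And>n j. 0 \<le> g n j"
  shows "(\<lambda>n. g n j) \<longlonglongrightarrow> 0"
proof -
  define t where "t n = g n j / (1 + g n j)" for n
  have le: "(1 / 2 ^ j) * t n \<le> (\<Sum>j. (1 / 2 ^ j) * (g n j / (1 + g n j)))" for n
  proof -
    let ?f = "\<lambda>j. (1 / 2 ^ j) * (g n j / (1 + g n j))"
    have fnn: "0 \<le> ?f i" for i using nn[of n i] by simp
    have "summable ?f"
    proof (rule summable_comparison_test'[of "\<lambda>i. (1/2)^i" 0])
      show "summable (\<lambda>i. (1/2::real)^i)" by (rule summable_geometric) simp
      fix i :: nat
      have "g n i / (1 + g n i) \<le> 1" using nn[of n i] by simp
      hence "?f i \<le> (1 / 2 ^ i) * 1" by (intro mult_left_mono) simp_all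
      hence "?f i \<le> 1 / 2 ^ i" by simp
      have "norm (?f i) = ?f i" by (simp only: real_norm_def abs_of_nonneg[OF fnn[of i]])
      also have "\<dots> \<le> 1 / 2 ^ i" by fact
      also have "(1::real) / 2 ^ i = (1/2)^i" by (simp add: power_one_over)
      finally show "norm (?f i) \<le> (1/2)^i" .
    qed
    from sum_le_suminf[OF this, of "{j}"] fnn show ?thesis unfolding t_def by simp
  qed
  have tnn: "0 \<le> t n" for n using nn[of n j] unfolding t_def by simp
  have "(\<lambda>n. t n) \<longlonglongrightarrow> 0"
  proof -
    have "(\<lambda>n. 2 ^ j * (\<Sum>j. (1 / 2 ^ j) * (g n j / (1 + g n j)))) \<longlonglongrightarrow> 2^j * 0"
      by (intro tendsto_intros lim)
    hence l2: "(\<lambda>n. 2 ^ j * (\<Sum>j. (1 / 2 ^ j) * (g n j / (1 + g n j)))) \<longlonglongrightarrow> 0" by simp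
    show ?thesis
    proof (rule Lim_null_comparison[OF _ l2], rule always_eventually, rule allI)
      fix n
      have "t n \<le> 2 ^ j * (\<Sum>j. (1 / 2 ^ j) * (g n j / (1 + g n j)))"
        using le[of n] by (simp add: field_simps)
      thus "norm (t n) \<le> 2 ^ j * (\<Sum>j. (1 / 2 ^ j) * (g n j / (1 + g n j)))" using tnn[of n] by simp
    qed
  qed
  hence "(\<lambda>n. t n / (1 - t n)) \<longlonglongrightarrow> 0 / (1 - 0)"
    by (intro tendsto_intros) auto
  moreover have "t n / (1 - t n) = g n j" for n
  proof -
    have "1 + g n j > 0" using nn[of n j] by simp
    thus ?thesis unfolding t_def by (simp add: field_simps)
  qed
  ultimately show ?thesis by simp
qed

locale setting = hilb sc ip for sc :: "complex \<Rightarrow> 'h::ab_group_add \<Rightarrow> 'h" and ip +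
  fixes domD :: "'h set" and D V :: "'h \<Rightarrow> 'h" and phi0 :: 'h
  assumes adm: "admissible sc ip domD D V"
    and phi0: "phi0 \<in> domD" "D phi0 = 0" "phi0 \<noteq> 0"
begin

lemma D_lin: "linear_on sc domD D"
  using adm unfolding admissible_def closed_operator_def by blast
lemma domD_sub: "hsubspace sc domD" using D_lin unfolding linear_on_def by blast
lemma domD_zero: "0 \<in> domD" using domD_sub unfolding hsubspace_def by blast
lemma domD_add: "x \<in> domD \<Longrightarrow> y \<in> domD \<Longrightarrow> x + y \<in> domD"
  using domD_sub unfolding hsubspace_def by blast
lemma domD_sc: "x \<in> domD \<Longrightarrow> sc a x \<in> domD"
  using domD_sub unfolding hsubspace_def by blast
lemma domD_diff: "x \<in> domD \<Longrightarrow> y \<in> domD \<Longrightarrow> x - y \<in> domD"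
  using domD_add[of x "sc (-1) y"] domD_sc[of y "-1"] by (simp add: sc_minus_left sc_one)
lemma D_add: "x \<in> domD \<Longrightarrow> y \<in> domD \<Longrightarrow> D (x + y) = D x + D y"
  using D_lin unfolding linear_on_def by blast
lemma D_sc: "x \<in> domD \<Longrightarrow> D (sc a x) = sc a (D x)"
  using D_lin unfolding linear_on_def by blast
lemma D_diff: "x \<in> domD \<Longrightarrow> y \<in> domD \<Longrightarrow> D (x - y) = D x - D y"
  using D_add[of x "sc (-1) y"] D_sc[of y "-1"] domD_sc[of y "-1"] by (simp add: sc_minus_left sc_one)
lemma D_zero: "D 0 = 0"
  using D_sc[OF domD_zero, of 0] by simp

lemma V_lin: "linear_on sc UNIV V"
  using adm unfolding admissible_def compact_op_def by blast
lemma V_add: "V (x + y) = V x + V y" using V_lin unfolding linear_on_def by blast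
lemma V_sc: "V (sc a x) = sc a (V x)" using V_lin unfolding linear_on_def by blast
lemma V_diff: "V (x - y) = V x - V y"
  using V_add[of x "sc (-1) y"] V_sc[of "-1" y] by (simp add: sc_minus_left sc_one)
lemma V_zero: "V 0 = 0" using V_sc[of 0 0] by simp
lemma V_dom: "V x \<in> domD" using adm unfolding admissible_def by blast
lemma DV: "D (V x) = x" using adm unfolding admissible_def by blast

lemma Dpow_add: "x \<in> C_inf domD D \<Longrightarrow> y \<in> C_inf domD D \<Longrightarrow> (D ^^ k) (x + y) = (D ^^ k) x + (D ^^ k) y"
  by (induction k) (auto simp: C_inf_char D_add)
lemma Dpow_sc: "x \<in> C_inf domD D \<Longrightarrow> (D ^^ k) (sc a x) = sc a ((D ^^ k) x)"
  by (induction k) (auto simp: C_inf_char D_sc)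
lemma C_inf_add: "x \<in> C_inf domD D \<Longrightarrow> y \<in> C_inf domD D \<Longrightarrow> x + y \<in> C_inf domD D"
  by (subst C_inf_char) (auto simp: Dpow_add C_inf_char intro: domD_add)
lemma C_inf_sc: "x \<in> C_inf domD D \<Longrightarrow> sc a x \<in> C_inf domD D"
  by (subst C_inf_char) (auto simp: Dpow_sc C_inf_char intro: domD_sc)
lemma C_inf_diff: "x \<in> C_inf domD D \<Longrightarrow> y \<in> C_inf domD D \<Longrightarrow> x - y \<in> C_inf domD D"
  using C_inf_add[of x "sc (-1) y"] C_inf_sc[of y "-1"] by (simp add: sc_minus_left sc_one)
lemma Dpow_zero: "(D ^^ k) 0 = 0" by (induction k) (auto simp: D_zero)
lemma C_inf_zero: "0 \<in> C_inf domD D" by (simp add: C_inf_char Dpow_zero domD_zero)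

lemma C_inf_lift: "u \<in> C_inf domD D \<Longrightarrow> y \<in> domD \<Longrightarrow> D y = u \<Longrightarrow> y \<in> C_inf domD D"
  unfolding C_inf_char
proof (intro allI)
  fix k assume u: "\<forall>k. (D ^^ k) u \<in> domD" and y: "y \<in> domD" "D y = u"
  show "(D ^^ k) y \<in> domD"
  proof (cases k)
    case 0 thus ?thesis using y by simp
  next
    case (Suc m)
    have "(D ^^ Suc m) y = (D ^^ m) (D y)" by (simp add: funpow_Suc_right del: funpow.simps)
    thus ?thesis using Suc u y by simp
  qed
qed

lemma C_inf_D: "y \<in> C_inf domD D \<Longrightarrow> D y \<in> C_inf domD D"
  unfolding C_inf_char
proof (intro allI)
  fix k assume "\<forall>k. (D ^^ k) y \<in> domD"
  hence "(D ^^ Suc k) y \<in> domD" by blast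
  moreover have "(D ^^ Suc k) y = (D ^^ k) (D y)" by (simp add: funpow_Suc_right del: funpow.simps)
  ultimately show "(D ^^ k) (D y) \<in> domD" by simp
qed

lemma C_inf_dom: "y \<in> C_inf domD D \<Longrightarrow> y \<in> domD"
  unfolding C_inf_char by (metis funpow_0)

lemma kernel: assumes "y \<in> domD" "D y = 0" shows "\<exists>c. y = sc c phi0"
proof -
  obtain e where e: "e \<noteq> 0" "{x\<in>domD. D x = 0} = range (\<lambda>c. sc c e)"
    using adm unfolding admissible_def by blast
  obtain c0 where c0: "phi0 = sc c0 e" using e(2) phi0 by blast
  have "c0 \<noteq> 0" using c0 phi0(3) by auto
  obtain c where c: "y = sc c e" using e(2) assms by blast
  have "sc (c / c0) phi0 = sc c e" using \<open>c0 \<noteq> 0\<close> by (simp add: c0 sc_sc)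
  thus ?thesis using c by metis
qed

lemma V_bounded: "\<exists>K. \<forall>x. hnorm ip (V x) \<le> K * hnorm ip x"
proof (rule ccontr)
  assume "\<not> ?thesis"
  hence "\<forall>n::nat. \<exists>x. hnorm ip (V x) > real n * hnorm ip x" by (meson not_le)
  then obtain x where x: "\<And>n. hnorm ip (V (x n)) > real n * hnorm ip (x n)" by metis
  have xpos: "hnorm ip (x n) > 0" for n
  proof -
    have "x n \<noteq> 0" using x[of n] by (auto simp: V_zero)
    thus ?thesis using hnorm_nonneg[of "x n"] hnorm_zero_iff[of "x n"] by linarith
  qed
  define w where "w n = sc (of_real (1 / hnorm ip (x n))) (x n)" for n
  have w1: "hnorm ip (w n) = 1" for n using xpos[of n] unfolding w_def by (simp add: hnorm_sc norm_divide)
  have wbig: "hnorm ip (V (w n)) > real n" for n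
  proof -
    have "hnorm ip (V (w n)) = hnorm ip (V (x n)) / hnorm ip (x n)"
      using xpos[of n] unfolding w_def by (simp add: V_sc hnorm_sc norm_divide)
    hence "hnorm ip (V (x n)) = hnorm ip (V (w n)) * hnorm ip (x n)" using xpos[of n] by simp
    hence "real n * hnorm ip (x n) < hnorm ip (V (w n)) * hnorm ip (x n)" using x[of n] by simp
    thus ?thesis using mult_less_cancel_right_pos[OF xpos[of n]] by blast
  qed
  have "compact_op sc ip V" using adm unfolding admissible_def by blast
  then obtain r l where r: "strict_mono r" "hconv ip (\<lambda>n. V (w (r n))) l"
    unfolding compact_op_def using w1 by (metis order_refl)
  hence "(\<lambda>n. hnorm ip (V (w (r n)) - l)) \<longlonglongrightarrow> 0" unfolding hconv_def by simp
  then obtain N where N: "\<And>n. n \<ge> N \<Longrightarrow> hnorm ip (V (w (r n)) - l) < 1"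
    using LIMSEQ_D[of _ 0 1] by fastforce
  obtain m :: nat where m: "real m > 1 + hnorm ip l" using reals_Archimedean2 by blast
  define n where "n = max N m"
  have "hnorm ip (V (w (r n))) \<le> hnorm ip (V (w (r n)) - l) + hnorm ip l"
    using hnorm_triangle[of "V (w (r n)) - l" l] by simp
  also have "\<dots> < 1 + hnorm ip l" using N[of n] n_def by simp
  also have "\<dots> < real m" by (rule m)
  also have "real m \<le> real (r n)" using seq_suble[OF r(1), of n] n_def by simp
  finally show False using wbig[of "r n"] by simp
qed

lemma phi_unique: "\<exists>!y. y - sc lam (V y) = phi0"
proof (cases "lam = 0")
  case True thus ?thesis by simp
next
  case False
  define mu where "mu = 1 / lam"
  have mu0: "mu \<noteq> 0" and lm: "lam * mu = 1" using False by (auto simp: mu_def)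
  have "mu \<notin> op_spectrum sc ip V" using adm mu0 unfolding admissible_def by auto
  then obtain S where S: "\<And>x. S (V x - sc mu x) = x" "\<And>y. V (S y) - sc mu (S y) = y"
    unfolding op_spectrum_def by blast
  have iden: "V y - sc mu y = sc (- mu) (y - sc lam (V y))" for y
    using lm by (simp add: sc_diff_right sc_sc sc_minus_left sc_one mult.commute)
  have iden2: "y - sc lam (V y) = sc (- lam) (V y - sc mu y)" for y
    using lm by (simp add: sc_diff_right sc_sc sc_minus_left sc_one mult.commute)
  define y0 where "y0 = S (sc (- mu) phi0)"
  have "y0 - sc lam (V y0) = phi0"
    unfolding iden2 y0_def S(2) using lm by (simp add: sc_sc sc_one mult.commute)
  moreover have "y = y0" if "y - sc lam (V y) = phi0" for y
    using S(1)[of y] unfolding iden that y0_def by simp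
  ultimately show ?thesis by blast
qed

definition phi :: "complex \<Rightarrow> 'h" where "phi lam = phi_fun sc V phi0 lam"

lemma phi_eq: "phi lam - sc lam (V (phi lam)) = phi0"
  unfolding phi_def phi_fun_def by (rule theI'[OF phi_unique])

lemma phi_0: "phi 0 = phi0"
  using phi_eq[of 0] by simp

lemma phi_dom: "phi lam \<in> domD" and D_phi: "D (phi lam) = sc lam (phi lam)"
proof -
  have e: "phi lam = phi0 + sc lam (V (phi lam))" using phi_eq[of lam] by (simp add: diff_eq_eq add.commute)
  show "phi lam \<in> domD" by (subst e) (intro domD_add domD_sc phi0 V_dom)
  show "D (phi lam) = sc lam (phi lam)"
    by (subst (1) e) (simp add: D_add domD_sc V_dom phi0 D_sc DV)
qed

lemma Dpow_phi: "(D ^^ k) (phi lam) = sc (lam ^ k) (phi lam)"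
  by (induction k) (simp_all add: sc_one D_sc phi_dom D_phi sc_sc mult.commute)

lemma phi_C_inf: "phi lam \<in> C_inf domD D"
  unfolding C_inf_char Dpow_phi by (simp add: domD_sc phi_dom)

end


context setting
begin

definition Vb :: "'h \<Rightarrow> 'h \<Rightarrow> 'h" where "Vb xb u = V u + sc (ip u xb) phi0"

lemma Vb_dom: "Vb xb u \<in> domD" unfolding Vb_def by (intro domD_add V_dom domD_sc phi0)
lemma D_Vb: "D (Vb xb u) = u"
  unfolding Vb_def by (simp add: D_add V_dom domD_sc phi0 D_sc DV)
lemma Vb_C_inf: "u \<in> C_inf domD D \<Longrightarrow> Vb xb u \<in> C_inf domD D"
  by (rule C_inf_lift[OF _ Vb_dom D_Vb])

lemma M_subspace: "hsubspace sc ((\<lambda>u. V u + sc (ip u xb) phi0) ` C_inf domD D)"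
  unfolding Vb_def[symmetric] hsubspace_def
proof (intro conjI ballI allI)
  have "Vb xb 0 = 0" unfolding Vb_def by (simp add: V_zero)
  thus "0 \<in> Vb xb ` C_inf domD D" using C_inf_zero by (metis image_eqI)
next
  fix x y assume "x \<in> Vb xb ` C_inf domD D" "y \<in> Vb xb ` C_inf domD D"
  then obtain u v where uv: "u \<in> C_inf domD D" "v \<in> C_inf domD D" "x = Vb xb u" "y = Vb xb v" by blast
  have "x + y = Vb xb (u + v)" unfolding uv Vb_def
    by (simp add: V_add ip_add_left sc_add_left algebra_simps)
  thus "x + y \<in> Vb xb ` C_inf domD D" using C_inf_add[OF uv(1,2)] by blast
next
  fix a x assume "x \<in> Vb xb ` C_inf domD D"
  then obtain u where u: "u \<in> C_inf domD D" "x = Vb xb u" by blast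
  have "sc a x = Vb xb (sc a u)" unfolding u Vb_def
    by (simp add: V_sc ip_sc_left sc_add_right sc_sc)
  thus "sc a x \<in> Vb xb ` C_inf domD D" using C_inf_sc[OF u(1)] by blast
qed

lemma M_closed: "C_inf_closed ip domD D ((\<lambda>u. V u + sc (ip u xb) phi0) ` C_inf domD D)"
  unfolding Vb_def[symmetric] C_inf_closed_def
proof (intro conjI allI impI)
  show "Vb xb ` C_inf domD D \<subseteq> C_inf domD D" using Vb_C_inf by blast
next
  fix X y assume asm: "(\<forall>n. X n \<in> Vb xb ` C_inf domD D) \<and> y \<in> C_inf domD D \<and>
      (\<lambda>n. C_inf_dist ip D (X n) y) \<longlonglongrightarrow> 0"
  hence y: "y \<in> C_inf domD D" and lim: "(\<lambda>n. C_inf_dist ip D (X n) y) \<longlonglongrightarrow> 0" by auto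
  from asm have "\<forall>n. \<exists>u. u \<in> C_inf domD D \<and> X n = Vb xb u" by blast
  then obtain u where u: "\<And>n. u n \<in> C_inf domD D" "\<And>n. X n = Vb xb (u n)" by metis
  have lim': "(\<lambda>n. \<Sum>j. (1 / 2 ^ j) * ((\<lambda>n j. hnorm ip ((D ^^ j) (X n) - (D ^^ j) y)) n j /
      (1 + (\<lambda>n j. hnorm ip ((D ^^ j) (X n) - (D ^^ j) y)) n j))) \<longlonglongrightarrow> 0"
    using lim unfolding C_inf_dist_def by simp
  have t0: "(\<lambda>n. hnorm ip (X n - y)) \<longlonglongrightarrow> 0"
    using dist_term_tendsto[OF lim', of 0] hnorm_nonneg by simp
  have t1': "(\<lambda>n. hnorm ip (D (X n) - D y)) \<longlonglongrightarrow> 0"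
    using dist_term_tendsto[OF lim', of 1] hnorm_nonneg by simp
  have DX: "D (X n) = u n" for n using u(2) D_Vb by simp
  have t1: "(\<lambda>n. hnorm ip (u n - D y)) \<longlonglongrightarrow> 0" using t1' unfolding DX .
  have ydom: "y \<in> domD" using y C_inf_dom by blast
  have Dy: "D y \<in> C_inf domD D" using C_inf_D[OF y] .
  have "y - V (D y) \<in> domD" using ydom V_dom domD_diff by blast
  moreover have "D (y - V (D y)) = 0" using D_diff[OF ydom V_dom] DV by simp
  ultimately obtain c where c: "y - V (D y) = sc c phi0" using kernel by blast
  obtain K where K: "\<And>x. hnorm ip (V x) \<le> K * hnorm ip x" using V_bounded by blast
  have hp: "hnorm ip phi0 > 0" using phi0(3) hnorm_zero_iff hnorm_nonneg by (metis less_eq_real_def)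
  have eqn: "sc (ip (u n) xb - c) phi0 = (X n - y) - V (u n - D y)" for n
    using c unfolding u(2) Vb_def by (simp add: sc_diff_left V_diff algebra_simps)
  have bnd: "cmod (ip (u n) xb - c) \<le> (hnorm ip (X n - y) + K * hnorm ip (u n - D y)) / hnorm ip phi0" for n
  proof -
    have "cmod (ip (u n) xb - c) * hnorm ip phi0 = hnorm ip ((X n - y) - V (u n - D y))"
      unfolding eqn[symmetric] hnorm_sc ..
    also have "\<dots> \<le> hnorm ip (X n - y) + hnorm ip (V (u n - D y))" by (rule hnorm_triangle_diff)
    also have "\<dots> \<le> hnorm ip (X n - y) + K * hnorm ip (u n - D y)" using K by simp
    finally show ?thesis using hp by (simp add: field_simps)
  qed
  have "(\<lambda>n. (hnorm ip (X n - y) + K * hnorm ip (u n - D y)) / hnorm ip phi0) \<longlonglongrightarrow> (0 + K * 0) / hnorm ip phi0"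
    by (intro tendsto_intros t0 t1) (use hp in simp)
  hence lb: "(\<lambda>n. (hnorm ip (X n - y) + K * hnorm ip (u n - D y)) / hnorm ip phi0) \<longlonglongrightarrow> 0" by simp
  have ev: "\<forall>\<^sub>F n in sequentially. norm (ip (u n) xb - c) \<le> (hnorm ip (X n - y) + K * hnorm ip (u n - D y)) / hnorm ip phi0"
    by (rule always_eventually) (use bnd in simp)
  have "(\<lambda>n. ip (u n) xb - c) \<longlonglongrightarrow> 0" by (rule Lim_null_comparison[OF ev lb])
  hence l1: "(\<lambda>n. ip (u n) xb) \<longlonglongrightarrow> c" by (rule LIM_zero_cancel)
  have "(\<lambda>n. ip (u n) xb - ip (D y) xb) \<longlonglongrightarrow> 0"
  proof (rule Lim_null_comparison[of _ "\<lambda>n. hnorm ip (u n - D y) * hnorm ip xb"])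
    show "\<forall>\<^sub>F n in sequentially. norm (ip (u n) xb - ip (D y) xb) \<le> hnorm ip (u n - D y) * hnorm ip xb"
      using cauchy_schwarz by (simp add: ip_diff_left[symmetric])
    show "(\<lambda>n. hnorm ip (u n - D y) * hnorm ip xb) \<longlonglongrightarrow> 0"
      using tendsto_mult[OF t1 tendsto_const[of "hnorm ip xb"]] by simp
  qed
  hence l2: "(\<lambda>n. ip (u n) xb) \<longlonglongrightarrow> ip (D y) xb" by (rule LIM_zero_cancel)
  have "c = ip (D y) xb" using LIMSEQ_unique[OF l1 l2] .
  hence "y = Vb xb (D y)" using c unfolding Vb_def by (simp add: diff_eq_eq add.commute)
  thus "y \<in> Vb xb ` C_inf domD D" using Dy by blast
qed

lemma annih:
  fixes \<beta> :: real
  assumes x\<beta>: "gen_fourier sc ip V phi0 xb =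
               (\<lambda>z. if z = 0 then - \<i> * of_real \<beta> else (1 - exp (\<i> * of_real \<beta> * z)) / z)"
    and ph: "\<phi> \<in> annihilator sc ip domD D ((\<lambda>u. V u + sc (ip u xb) phi0) ` C_inf domD D)"
  shows "\<exists>c. \<forall>z. gen_fourier_dual sc V phi0 \<phi> z = c * exp (\<i> * of_real \<beta> * z)"
proof -
  have dual: "\<phi> \<in> C_inf_dual sc ip domD D" and van: "\<And>x. x \<in> Vb xb ` C_inf domD D \<Longrightarrow> \<phi> x = 0"
    using ph unfolding annihilator_def Vb_def by auto
  have padd: "\<phi> (x + y) = \<phi> x + \<phi> y" if "x \<in> C_inf domD D" "y \<in> C_inf domD D" for x y
    using dual that unfolding C_inf_dual_def by blast
  have psc: "\<phi> (sc a x) = a * \<phi> x" if "x \<in> C_inf domD D" for a x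
    using dual that unfolding C_inf_dual_def by blast
  have p0C: "phi0 \<in> C_inf domD D" using phi_C_inf[of 0] phi_0 by simp
  have key: "\<phi> (phi lam) = exp (- \<i> * of_real \<beta> * lam) * \<phi> phi0" for lam
  proof (cases "lam = 0")
    case True thus ?thesis by (simp add: phi_0)
  next
    case False
    let ?p = "phi lam"
    have pC: "?p \<in> C_inf domD D" by (rule phi_C_inf)
    have VpC: "V ?p \<in> C_inf domD D" by (rule C_inf_lift[OF pC V_dom DV])
    have "\<phi> (Vb xb ?p) = 0" using van pC by blast
    hence z1: "\<phi> (V ?p) + ip ?p xb * \<phi> phi0 = 0"
      unfolding Vb_def by (simp add: padd[OF VpC C_inf_sc[OF p0C]] psc[OF p0C])
    have "sc lam (V ?p) = ?p + sc (-1) phi0"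
      using phi_eq[of lam] by (simp add: sc_minus_left sc_one algebra_simps)
    hence "lam * \<phi> (V ?p) = \<phi> ?p - \<phi> phi0"
      using psc[OF VpC, of lam] padd[OF pC C_inf_sc[OF p0C]] psc[OF p0C, of "-1"] by simp
    moreover have "ip ?p xb = (1 - exp (- \<i> * of_real \<beta> * lam)) / lam"
    proof -
      have "ip xb ?p = gen_fourier sc ip V phi0 xb (cnj lam)"
        unfolding gen_fourier_def phi_def by simp
      also have "\<dots> = (1 - exp (\<i> * of_real \<beta> * cnj lam)) / cnj lam" using False x\<beta> by simp
      finally have "ip ?p xb = cnj ((1 - exp (\<i> * of_real \<beta> * cnj lam)) / cnj lam)"
        by (subst ip_cnj) simp
      thus ?thesis by (simp add: exp_cnj)
    qed
    moreover have "lam * ((1 - exp (- \<i> * of_real \<beta> * lam)) / lam) = 1 - exp (- \<i> * of_real \<beta> * lam)"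
      using False by simp
    ultimately have "lam * (\<phi> (V ?p) + ip ?p xb * \<phi> phi0)
        = \<phi> ?p - \<phi> phi0 + (1 - exp (- \<i> * of_real \<beta> * lam)) * \<phi> phi0"
      by (simp only: distrib_left mult.assoc[symmetric])
    hence "\<phi> ?p - \<phi> phi0 + (1 - exp (- \<i> * of_real \<beta> * lam)) * \<phi> phi0 = 0" using z1 by simp
    thus ?thesis by (simp add: algebra_simps)
  qed
  show ?thesis
  proof (intro exI allI)
    fix z
    have "gen_fourier_dual sc V phi0 \<phi> z = cnj (\<phi> (phi (cnj z)))"
      unfolding gen_fourier_dual_def phi_def ..
    also have "\<dots> = cnj (\<phi> phi0) * exp (\<i> * of_real \<beta> * z)"
      unfolding key by (simp add: exp_cnj)
    finally show "gen_fourier_dual sc V phi0 \<phi> z = cnj (\<phi> phi0) * exp (\<i> * of_real \<beta> * z)" .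
  qed
qed

end

theorem lemma6p12:
  fixes sc :: "complex \<Rightarrow> 'h::ab_group_add \<Rightarrow> 'h"
    and ip :: "'h \<Rightarrow> 'h \<Rightarrow> complex"
    and domD :: "'h set" and D V :: "'h \<Rightarrow> 'h" and phi0 x\<beta> :: 'h
    and E :: "complex \<Rightarrow> complex" and \<alpha> \<beta> :: real
  assumes H: "separable_complex_hilbert sc ip"
    and adm: "admissible sc ip domD D V"
    and phi0: "phi0 \<in> domD" "D phi0 = 0" "phi0 \<noteq> 0"
    and E_HB: "hermite_biehler E" and E_reg: "regular_HB E"
    and E_nz: "\<forall>t::real. E (of_real t) \<noteq> 0"
    and unitary:
      "(\<lambda>f z. exp (\<i> * of_real \<alpha> * z) * f z) ` range (gen_fourier sc ip V phi0) = de_branges_space E"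
      "\<forall>x. de_branges_norm E (\<lambda>z. exp (\<i> * of_real \<alpha> * z) * gen_fourier sc ip V phi0 x z) = hnorm ip x"
    and \<beta>: "ereal \<bar>\<beta> + \<alpha>\<bar> \<le> exp_type E"
    and x\<beta>: "gen_fourier sc ip V phi0 x\<beta> =
               (\<lambda>z. if z = 0 then - \<i> * of_real \<beta> else (1 - exp (\<i> * of_real \<beta> * z)) / z)"
  shows "hsubspace sc ((\<lambda>u. V u + sc (ip u x\<beta>) phi0) ` C_inf domD D) \<and>
         C_inf_closed ip domD D ((\<lambda>u. V u + sc (ip u x\<beta>) phi0) ` C_inf domD D) \<and>
         (\<forall>\<phi> \<in> annihilator sc ip domD D ((\<lambda>u. V u + sc (ip u x\<beta>) phi0) ` C_inf domD D).
            \<exists>c. \<forall>z. gen_fourier_dual sc V phi0 \<phi> z = c * exp (\<i> * of_real \<beta> * z))"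
  proof -
  interpret setting sc ip domD D V phi0
    by unfold_locales (use H adm phi0 in auto)
  show ?thesis using M_subspace[of x\<beta>] M_closed[of x\<beta>] annih[OF x\<beta>] by blast
qed

end
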